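(* Let $n\in\mathbb N$ and let $A$ be a connected monounary algebra containing an $n$-element cycle. If $A\not\cong\underline n$ and $A^{(\infty)}=A$, then $\mathbf V(A)=\mathbf V(\widehat n)$.
   Context: A monounary algebra is a pair $(A,f)$ with $A$ a nonempty set and $f:A\to A$; direct products are coordinatewise. It is connected if for all $x,y$ there are $m,n\ge0$ with $f^m(x)=f^n(y)$; an $n$-element cycle is a set $\{x,f(x),\dots,f^{n-1}(x)\}$ of $n$ distinct elements with $f^n(x)=x$. A retract of $A$ is a nonempty subalgebra $M$ such that there is an endomorphism $h:A\to M$ with $h|_M=\mathrm{id}$. A retract variety is a class closed under isomorphisms, retracts and direct products; $\mathbf V(\mathcal K)$ is the smallest retract variety containing $\mathcal K$. $A^{(\infty)}$ is the set of $x\in A$ admitting a sequence $x_0=x,x_1,\dots$ in $A$ with $f(x_n)=x_{n-1}$ for all $n\ge1$. $\underline n=(\mathbb Z_n,k\mapsto k+1\bmod n)$; $\widehat n$ has universe $\mathbb Z_n\cup\{(k,1):k\in\mathbb N\}$ with $f(k)=k+1\bmod n$ on $\mathbb Z_n$, $f((k,1))=(k-1,1)$ for $k>1$, $f((1,1))=0$. *)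

theory Defs
  imports "HOL-Library.FuncSet"
begin

text \<open>A monounary algebra is represented by a carrier set A and a map f
 (only its behaviour on A matters).\<close>

definition mono_alg :: "'a set \<Rightarrow> ('a \<Rightarrow> 'a) \<Rightarrow> bool" where
  "mono_alg A f \<longleftrightarrow> A \<noteq> {} \<and> f ` A \<subseteq> A"

definition mhom :: "'a set \<Rightarrow> ('a \<Rightarrow> 'a) \<Rightarrow> 'b set \<Rightarrow> ('b \<Rightarrow> 'b) \<Rightarrow> ('a \<Rightarrow> 'b) \<Rightarrow> bool" where
  "mhom A f B g h \<longleftrightarrow> h ` A \<subseteq> B \<and> (\<forall>x\<in>A. h (f x) = g (h x))"

definition misomorphic :: "'a set \<Rightarrow> ('a \<Rightarrow> 'a) \<Rightarrow> 'b set \<Rightarrow> ('b \<Rightarrow> 'b) \<Rightarrow> bool" where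
  "misomorphic A f B g \<longleftrightarrow> (\<exists>h. mhom A f B g h \<and> bij_betw h A B)"

definition mconnected :: "'a set \<Rightarrow> ('a \<Rightarrow> 'a) \<Rightarrow> bool" where
  "mconnected A f \<longleftrightarrow> (\<forall>x\<in>A. \<forall>y\<in>A. \<exists>m k. (f ^^ m) x = (f ^^ k) y)"

definition has_cycle :: "'a set \<Rightarrow> ('a \<Rightarrow> 'a) \<Rightarrow> nat \<Rightarrow> bool" where
  "has_cycle A f n \<longleftrightarrow> (\<exists>x\<in>A. (f ^^ n) x = x \<and> card ((\<lambda>k. (f ^^ k) x) ` {..<n}) = n)"

definition mretract :: "'a set \<Rightarrow> ('a \<Rightarrow> 'a) \<Rightarrow> 'a set \<Rightarrow> bool" where
  "mretract A f M \<longleftrightarrow> M \<noteq> {} \<and> M \<subseteq> A \<and> f ` M \<subseteq> M \<and>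
     (\<exists>h. mhom A f M f h \<and> (\<forall>x\<in>M. h x = x))"

definition inf_part :: "'a set \<Rightarrow> ('a \<Rightarrow> 'a) \<Rightarrow> 'a set" where
  "inf_part A f = {x\<in>A. \<exists>s::nat \<Rightarrow> 'a. s 0 = x \<and> (\<forall>k. s k \<in> A) \<and> (\<forall>k\<ge>1. f (s k) = s (k - 1))}"

definition pow_carrier :: "'i set \<Rightarrow> 'b set \<Rightarrow> ('i \<Rightarrow> 'b) set" where
  "pow_carrier I B = PiE I (\<lambda>_. B)"

definition pow_fun :: "'i set \<Rightarrow> ('b \<Rightarrow> 'b) \<Rightarrow> ('i \<Rightarrow> 'b) \<Rightarrow> ('i \<Rightarrow> 'b)" where
  "pow_fun I g x = (\<lambda>i\<in>I. g (x i))"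

text \<open>The index set may be taken inside the type 'x => 'b
 (the hom-set Hom(X,B) suffices as index set).\<close>
definition in_rV :: "'x set \<Rightarrow> ('x \<Rightarrow> 'x) \<Rightarrow> 'b set \<Rightarrow> ('b \<Rightarrow> 'b) \<Rightarrow> bool" where
  "in_rV X fX B g \<longleftrightarrow> (\<exists>(I :: ('x \<Rightarrow> 'b) set) M.
      mretract (pow_carrier I B) (pow_fun I g) M \<and> misomorphic M (pow_fun I g) X fX)"

text \<open>V(A) = V(B) iff each generator lies in the other retract variety.\<close>
definition same_rV :: "'a set \<Rightarrow> ('a \<Rightarrow> 'a) \<Rightarrow> 'b set \<Rightarrow> ('b \<Rightarrow> 'b) \<Rightarrow> bool" where
  "same_rV A f B g \<longleftrightarrow> in_rV A f B g \<and> in_rV B g A f"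

definition cyc_carrier :: "nat \<Rightarrow> nat set" where "cyc_carrier n = {..<n}"
definition cyc_fun :: "nat \<Rightarrow> nat \<Rightarrow> nat" where "cyc_fun n k = (Suc k) mod n"

text \<open>hat n: Inl k represents k in Z_n, Inr k (k >= 1) represents (k,1).\<close>
definition hat_carrier :: "nat \<Rightarrow> (nat + nat) set" where
  "hat_carrier n = Inl ` {..<n} \<union> Inr ` {1..}"
fun hat_fun :: "nat \<Rightarrow> nat + nat \<Rightarrow> nat + nat" where
  "hat_fun n (Inl k) = Inl (Suc k mod n)"
| "hat_fun n (Inr k) = (if k > 1 then Inr (k - 1) else Inl 0)"

end

theory Submission
  imports Defs "HOL-Number_Theory.Cong"
begin

lemma mod_rcancel: "((a::nat) + c) mod n = (b + c) mod n \<Longrightarrow> a mod n = b mod n"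
  using cong_add_rcancel_nat[of a c b n] unfolding cong_def by simp

lemma retract_from_embedding:
  fixes X :: "'x set" and fX :: "'x \<Rightarrow> 'x" and B :: "'b set" and g :: "'b \<Rightarrow> 'b"
    and I :: "('x \<Rightarrow> 'b) set"
    and e q
  assumes ne: "X \<noteq> {}" and cl: "fX ` X \<subseteq> X" and sur: "X \<subseteq> fX ` X"
    and he: "mhom X fX (pow_carrier I B) (pow_fun I g) e" and ie: "inj_on e X"
    and hq: "mhom (pow_carrier I B) (pow_fun I g) X fX q"
  shows "in_rV X fX B g"
proof -
  define P where "P = pow_carrier I B"
  define F where "F = pow_fun I g"
  define M where "M = e ` X"
  define pre where "pre = (\<lambda>a. SOME y. y \<in> X \<and> fX y = a)"
  have pre: "pre a \<in> X \<and> fX (pre a) = a" if "a \<in> X" for a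
  proof -
    from sur that obtain y where "y \<in> X" "a = fX y" by blast
    then show ?thesis unfolding pre_def by (metis (mono_tags, lifting) someI)
  qed
  have preX: "(pre^^t) a \<in> X" if "a \<in> X" for t a
    using that by (induction t) (auto simp: pre)
  have eP: "e x \<in> P" if "x \<in> X" for x using he that unfolding mhom_def P_def by auto
  have eF: "F (e x) = e (fX x)" if "x \<in> X" for x using he that unfolding mhom_def F_def by auto
  have qX: "q z \<in> X" if "z \<in> P" for z using hq that unfolding mhom_def P_def by auto
  have qF: "q (F z) = fX (q z)" if "z \<in> P" for z using hq that unfolding mhom_def P_def F_def by auto
  define T where "T = (\<lambda>z. LEAST t. (F^^t) z \<in> M)"
  define r where "r = (\<lambda>z. if (\<exists>t. (F^^t) z \<in> M) then (pre^^(T z)) (inv_into X e ((F^^(T z)) z)) else q z)"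
  have rX: "r z \<in> X" if "z \<in> P" for z
  proof (cases "\<exists>t. (F^^t) z \<in> M")
    case True
    then have "(F^^(T z)) z \<in> M" unfolding T_def by (rule LeastI_ex)
    then have "inv_into X e ((F^^(T z)) z) \<in> X" unfolding M_def by (rule inv_into_into)
    then show ?thesis using True preX unfolding r_def by simp
  next
    case False
    then show ?thesis using qX that unfolding r_def by simp
  qed
  have re: "r (e x) = x" if "x \<in> X" for x
  proof -
    have ex: "\<exists>t. (F^^t) (e x) \<in> M" using that M_def by (metis funpow_0 imageI)
    have "T (e x) = 0" unfolding T_def using that M_def by (simp add: Least_eq_0)
    then show ?thesis using ex that ie unfolding r_def by simp
  qed
  have rF: "r (F z) = fX (r z)" if "z \<in> P" for z
  proof (cases "\<exists>t. (F^^t) z \<in> M")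
    case True
    show ?thesis
    proof (cases "T z")
      case 0
      then have "z \<in> M" using LeastI_ex[OF True] T_def by simp
      then obtain x where x: "x \<in> X" "z = e x" by (auto simp: M_def)
      then show ?thesis using re cl eF by auto
    next
      case (Suc t)
      have hz: "(F^^(Suc t)) z \<in> M" using LeastI_ex[OF True] Suc T_def by simp
      have mn: "(F^^s) z \<notin> M" if "s < Suc t" for s using not_less_Least Suc T_def that by metis
      have sh: "(F^^s) (F z) = (F^^(Suc s)) z" for s by (metis funpow_Suc_right comp_apply)
      have ex2: "\<exists>t. (F^^t) (F z) \<in> M" using hz sh by metis
      have T2: "T (F z) = t"
        unfolding T_def
      proof (rule Least_equality)
        show "(F ^^ t) (F z) \<in> M" using hz sh by simp
        show "t \<le> y" if "(F ^^ y) (F z) \<in> M" for y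
          using that mn[of "Suc y"] sh by (metis Suc_less_eq not_le)
      qed
      define a where "a = inv_into X e ((F^^(Suc t)) z)"
      have aX: "a \<in> X" using hz M_def inv_into_into a_def by metis
      have "r z = pre ((pre^^t) a)" using True Suc unfolding r_def a_def by simp
      moreover have "r (F z) = (pre^^t) a" using ex2 T2 sh unfolding r_def a_def by simp
      ultimately show ?thesis using pre[OF preX[OF aX]] by simp
    qed
  next
    case False
    then have "\<not>(\<exists>t. (F^^t) (F z) \<in> M)" by (metis funpow_Suc_right comp_apply)
    then show ?thesis using False qF that unfolding r_def by simp
  qed
  define h where "h = e \<circ> r"
  have MP: "M \<subseteq> P" using eP M_def by auto
  have "mretract P F M"
    unfolding mretract_def
  proof (intro conjI)
    show "M \<noteq> {}" using ne M_def by auto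
    show "M \<subseteq> P" by fact
    show "F ` M \<subseteq> M" using eF cl M_def by auto
    show "\<exists>h. mhom P F M F h \<and> (\<forall>x\<in>M. h x = x)"
    proof (intro exI conjI)
      show "mhom P F M F h" unfolding mhom_def h_def M_def using rX rF eF by auto
      show "\<forall>x\<in>M. h x = x" unfolding h_def M_def using re by auto
    qed
  qed
  moreover have "misomorphic M F X fX"
    unfolding misomorphic_def
  proof (intro exI conjI)
    show "mhom M F X fX r" unfolding mhom_def using rX rF MP by auto
    show "bij_betw r M X"
      by (rule bij_betw_byWitness[where f'=e]) (use re rX MP M_def in auto)
  qed
  ultimately show ?thesis unfolding in_rV_def P_def F_def by blast
qed


locale cs =
  fixes A :: "'a set" and f :: "'a \<Rightarrow> 'a" and n :: nat and c0 :: 'a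
  assumes n1: "n \<ge> 1" and cl: "f ` A \<subseteq> A" and c0A: "c0 \<in> A"
    and c0n: "(f^^n) c0 = c0" and cinj: "inj_on (\<lambda>k. (f^^k) c0) {..<n}"
    and conn: "\<And>x. x \<in> A \<Longrightarrow> \<exists>m k. (f^^m) x = (f^^k) c0"
begin

definition cy where "cy k = (f^^k) c0"
definition C where "C = range cy"

lemma fA: "x \<in> A \<Longrightarrow> f x \<in> A" using cl by auto
lemma funpowA: "x \<in> A \<Longrightarrow> (f^^k) x \<in> A" by (induction k) (auto simp: fA)
lemma cyA: "cy k \<in> A" unfolding cy_def by (rule funpowA[OF c0A])
lemma CA: "C \<subseteq> A" using cyA C_def by auto
lemma f_cy: "f (cy k) = cy (Suc k)" by (simp add: cy_def)
lemma funpow_cy: "(f^^a) (cy k) = cy (a + k)" by (simp add: cy_def funpow_add)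
lemma cy_add_n: "cy (k + n) = cy k"
  by (metis add.commute c0n cy_def funpow_cy)
lemma cy_add_mult: "cy (k + n*q) = cy k"
proof (induction q)
  case (Suc q)
  have eq: "k + n * Suc q = (k + n*q) + n" by simp
  show ?case by (simp only: eq cy_add_n Suc.IH)
qed simp
lemma cy_mod: "cy k = cy (k mod n)"
  using cy_add_mult[of "k mod n" "k div n"] by (simp add: mod_mult_div_eq)
lemma cy_eq_iff: "cy a = cy b \<longleftrightarrow> a mod n = b mod n"
proof
  assume "cy a = cy b"
  then have "cy (a mod n) = cy (b mod n)" using cy_mod by metis
  moreover have "a mod n < n" "b mod n < n" using n1 by auto
  ultimately show "a mod n = b mod n" using inj_onD[OF cinj] unfolding cy_def by auto
qed (metis cy_mod)

lemma C_f: "x \<in> C \<Longrightarrow> f x \<in> C" using f_cy C_def by auto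
lemma C_funpow: "x \<in> C \<Longrightarrow> (f^^k) x \<in> C" using funpow_cy C_def by auto

lemma periodic_in_C:
  assumes "w \<in> A" "(f^^p) w = w" "p \<ge> 1" shows "w \<in> C"
proof -
  obtain m k where mk: "(f^^m) w = cy k" using conn[OF assms(1)] cy_def by auto
  have pm: "(f^^(p*m)) w = w"
  proof (induction m)
    case (Suc m)
    have "(f^^(p * Suc m)) w = (f^^p) ((f^^(p*m)) w)" by (simp add: funpow_add)
    then show ?case using Suc assms(2) by simp
  qed simp
  have "p*m \<ge> m" using assms(3) by simp
  then have "(f^^(p*m)) w = (f^^(p*m - m)) ((f^^m) w)" by (metis funpow_add comp_apply le_add_diff_inverse2)
  then have "w = cy (p*m - m + k)" using pm mk funpow_cy by simp
  then show ?thesis unfolding C_def by auto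
qed

definition ph where
  "ph x = (SOME p. p < n \<and> (\<exists>m k. (f^^m) x = cy k \<and> (p + m) mod n = k mod n))"

lemma ph_consistent_le:
  assumes "(f^^m) x = cy k" "(f^^m') x = cy k'" "(p + m) mod n = k mod n"
    "(p' + m') mod n = k' mod n" "m \<le> m'"
  shows "p mod n = p' mod n"
proof -
  have "cy k' = (f^^(m'-m)) ((f^^m) x)"
    using assms(2,5) by (metis funpow_add comp_apply le_add_diff_inverse2)
  then have "cy k' = cy (m' - m + k)" using assms(1) funpow_cy by simp
  then have k': "k' mod n = (m' - m + k) mod n" using cy_eq_iff by simp
  have "(p + m') mod n = ((p + m) + (m' - m)) mod n" using assms(5) by simp
  also have "\<dots> = ((p + m) mod n + (m' - m)) mod n" by (simp add: mod_add_left_eq)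
  also have "\<dots> = (k mod n + (m' - m)) mod n" using assms(3) by simp
  also have "\<dots> = (m' - m + k) mod n" by (metis add.commute mod_add_left_eq)
  also have "\<dots> = (p' + m') mod n" using k' assms(4) by simp
  finally show ?thesis by (rule mod_rcancel)
qed

lemma ph_spec:
  assumes "x \<in> A" shows "ph x < n \<and> (\<exists>m k. (f^^m) x = cy k \<and> (ph x + m) mod n = k mod n)"
proof -
  obtain m k where mk: "(f^^m) x = cy k" using conn[OF assms] cy_def by auto
  define p where "p = (k + n*m - m) mod n"
  have "n*m \<ge> m" using n1 by simp
  have "(p + m) mod n = (k + n*m - m + m) mod n" unfolding p_def by (simp add: mod_add_left_eq)
  also have "\<dots> = (k + n*m) mod n" using \<open>n*m \<ge> m\<close> by (metis le_add2 add_diff_assoc le_add_diff_inverse2 add.assoc)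
  also have "\<dots> = k mod n" by simp
  finally have "p < n \<and> (\<exists>m k. (f^^m) x = cy k \<and> (p + m) mod n = k mod n)"
    using mk n1 p_def by auto
  then show ?thesis unfolding ph_def by (rule someI)
qed

lemma ph_lt: "x \<in> A \<Longrightarrow> ph x < n" using ph_spec by blast

lemma ph_eqI:
  assumes "x \<in> A" "p < n" "(f^^m) x = cy k" "(p + m) mod n = k mod n"
  shows "ph x = p"
proof -
  obtain m' k' where mk': "(f^^m') x = cy k'" "(ph x + m') mod n = k' mod n" "ph x < n"
    using ph_spec[OF assms(1)] by blast
  have "ph x mod n = p mod n"
  proof (cases "m \<le> m'")
    case True
    then show ?thesis using ph_consistent_le[OF assms(3) mk'(1) assms(4) mk'(2)] by simp
  next
    case False
    then show ?thesis using ph_consistent_le[OF mk'(1) assms(3) mk'(2) assms(4)] by simp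
  qed
  then show ?thesis using mk'(3) assms(2) by simp
qed

lemma ph_cy: "ph (cy k) = k mod n"
  by (rule ph_eqI[where m=0 and k=k]) (use cyA n1 in auto)

lemma ph_f: assumes "x \<in> A" shows "ph (f x) = Suc (ph x) mod n"
proof -
  obtain m k where mk: "(f^^m) x = cy k" "(ph x + m) mod n = k mod n"
    using ph_spec[OF assms] by blast
  have a: "(f^^m) (f x) = cy (Suc k)" using mk(1) f_cy by (metis funpow_Suc_right comp_apply funpow_swap1)
  have b: "(Suc (ph x) mod n + m) mod n = Suc k mod n"
  proof -
    have "(Suc (ph x) mod n + m) mod n = Suc (ph x + m) mod n" by (simp add: mod_add_left_eq)
    also have "\<dots> = Suc ((ph x + m) mod n) mod n" by (simp add: mod_Suc_eq)
    also have "\<dots> = Suc k mod n" using mk(2) by (simp add: mod_Suc_eq)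
    finally show ?thesis .
  qed
  show ?thesis by (rule ph_eqI[OF fA[OF assms] _ a b]) (use n1 in simp)
qed

definition H :: "'a \<Rightarrow> 'a \<Rightarrow> nat + nat" where
  "H w y = (if \<exists>t. (f^^t) y = w then Inr (Suc (LEAST t. (f^^t) y = w))
            else Inl ((ph y + n - ph (f w)) mod n))"
definition h0 :: "'a \<Rightarrow> nat + nat" where "h0 y = Inl (ph y)"

lemma unique_t:
  assumes "w \<in> A" "w \<notin> C" "(f^^t) y = w" "(f^^t') y = w" shows "t = t'"
proof (rule ccontr)
  assume "t \<noteq> t'"
  have *: "False" if "(f^^a) y = w" "(f^^b) y = w" "a < b" for a b
  proof -
    have "(f^^(b - a)) w = (f^^(b - a)) ((f^^a) y)" using that by simp
    also have "\<dots> = (f^^(b - a + a)) y" by (simp only: funpow_add comp_apply)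
    also have "\<dots> = w" using that by simp
    finally have "(f^^(b - a)) w = w" .
    moreover have "1 \<le> b - a" using that(3) by simp
    ultimately show False using periodic_in_C[OF assms(1)] assms(2) by blast
  qed
  show False using \<open>t \<noteq> t'\<close> *[OF assms(3,4)] *[OF assms(4,3)] by linarith
qed

lemma H_Inr: assumes "w \<in> A" "w \<notin> C" "(f^^t) y = w" shows "H w y = Inr (Suc t)"
proof -
  have "(LEAST t. (f^^t) y = w) = t"
    by (rule Least_equality) (use assms unique_t in auto)
  then show ?thesis using assms unfolding H_def by auto
qed

lemma H_range: "H w y \<in> hat_carrier n"
  unfolding H_def hat_carrier_def using n1 by auto

lemma H_hom: assumes "w \<in> A" "w \<notin> C" "y \<in> A" shows "H w (f y) = hat_fun n (H w y)"
proof (cases "\<exists>t. (f^^t) y = w")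
  case True
  then obtain t where t: "(f^^t) y = w" by blast
  show ?thesis
  proof (cases t)
    case 0
    then have yw: "y = w" using t by simp
    have nt: "\<not>(\<exists>t. (f^^t) (f w) = w)"
    proof
      assume "\<exists>t. (f^^t) (f w) = w"
      then obtain s where "(f^^s) (f w) = w" by blast
      then have "(f^^(Suc s)) w = w" by (metis funpow_Suc_right comp_apply)
      from periodic_in_C[OF assms(1) this] assms(2) show False by simp
    qed
    have "H w (f w) = Inl 0" using nt unfolding H_def by simp
    moreover have "H w w = Inr (Suc 0)" using H_Inr[OF assms(1,2), of 0 w] by simp
    ultimately show ?thesis using yw by simp
  next
    case (Suc t')
    then have "(f^^t') (f y) = w" using t by (metis funpow_Suc_right comp_apply)
    then have "H w (f y) = Inr (Suc t')" using H_Inr assms by blast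
    moreover have "H w y = Inr (Suc (Suc t'))" using H_Inr assms t Suc by blast
    ultimately show ?thesis by simp
  qed
next
  case False
  then have nf: "\<not>(\<exists>t. (f^^t) (f y) = w)" by (metis funpow_Suc_right comp_apply)
  define P where "P = ph (f w)"
  have P: "P < n" using ph_lt fA assms(1) P_def by blast
  have "H w (f y) = Inl ((Suc (ph y) mod n + (n - P)) mod n)"
    using nf P unfolding H_def P_def by (simp add: ph_f assms(3))
  also have "\<dots> = Inl (Suc ((ph y + (n - P)) mod n) mod n)"
    by (simp add: mod_add_left_eq mod_Suc_eq)
  also have "\<dots> = hat_fun n (H w y)"
    using False P unfolding H_def P_def by simp
  finally show ?thesis .
qed

lemma h0_hom: "y \<in> A \<Longrightarrow> h0 (f y) = hat_fun n (h0 y)"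
  by (simp add: h0_def ph_f)
lemma h0_range: "y \<in> A \<Longrightarrow> h0 y \<in> hat_carrier n"
  unfolding h0_def hat_carrier_def using ph_lt by auto

lemma sep:
  assumes "x \<in> A" "y \<in> A" "x \<noteq> y"
  shows "\<exists>h \<in> insert h0 (H ` (A - C)). h x \<noteq> h y"
proof -
  have a: "\<exists>h \<in> insert h0 (H ` (A - C)). h x \<noteq> h y"
    if "x \<in> A" "x \<notin> C" "x \<noteq> y" for x y
  proof -
    have "H x x = Inr (Suc 0)" using H_Inr[OF that(1,2), of 0] by simp
    moreover have "H x y \<noteq> Inr (Suc 0)"
    proof
      assume "H x y = Inr (Suc 0)"
      then obtain t where "(f^^t) y = x" unfolding H_def by (auto split: if_splits)
      then have "H x y = Inr (Suc t)" using H_Inr that by blast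
      then have "t = 0" using \<open>H x y = Inr (Suc 0)\<close> by simp
      then show False using \<open>(f^^t) y = x\<close> that by simp
    qed
    ultimately have "H x x \<noteq> H x y" by simp
    moreover have "H x \<in> insert h0 (H ` (A - C))" using that by blast
    ultimately show ?thesis by blast
  qed
  show ?thesis
  proof (cases "x \<in> C \<and> y \<in> C")
    case True
    then obtain a b where ab: "x = cy a" "y = cy b" unfolding C_def by auto
    then have "h0 x \<noteq> h0 y" using assms(3) cy_eq_iff ph_cy unfolding h0_def by auto
    then show ?thesis by auto
  next
    case False
    show ?thesis
    proof (cases "x \<in> C")
      case True
      then have "y \<notin> C" using False by simp
      then obtain h where "h \<in> insert h0 (H ` (A - C))" "h y \<noteq> h x" using a[of y x] assms by blast
      then show ?thesis by metis
    next
      case False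
      then show ?thesis using a[of x y] assms by blast
    qed
  qed
qed

definition ev :: "nat + nat \<Rightarrow> 'a" where
  "ev u = (case u of Inl k \<Rightarrow> cy k | Inr k \<Rightarrow> cy (n*k - k))"

lemma ev_range: "ev u \<in> A" unfolding ev_def using cyA by (auto split: sum.split)

lemma ev_hom: assumes "u \<in> hat_carrier n" shows "ev (hat_fun n u) = f (ev u)"
proof (cases u)
  case (Inl k)
  then show ?thesis using cy_mod[of "Suc k"] f_cy unfolding ev_def by simp
next
  case (Inr k)
  then have k1: "k \<ge> 1" using assms unfolding hat_carrier_def by auto
  show ?thesis
  proof (cases "k > 1")
    case True
    obtain j where j: "k = Suc j" "j \<ge> 1" using True by (cases k) auto
    have "n*j \<ge> j" using n1 by simp
    have nk: "n*k = n + n*j" using j by simp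
    have eq: "Suc (n*k - k) = (n*j - j) + n" using nk \<open>n*j \<ge> j\<close> j n1 by linarith
    have "ev (hat_fun n u) = cy (n*j - j)" using Inr True j unfolding ev_def by simp
    also have "\<dots> = cy (Suc (n*k - k))" using eq cy_add_n by simp
    also have "\<dots> = f (ev u)" using Inr f_cy unfolding ev_def by simp
    finally show ?thesis .
  next
    case False
    then have "k = 1" using k1 by simp
    have "ev (hat_fun n u) = cy 0" using Inr \<open>k = 1\<close> unfolding ev_def by simp
    also have "\<dots> = cy (Suc (n - 1))" using cy_add_n[of 0] n1 by simp
    also have "\<dots> = f (ev u)" using Inr \<open>k = 1\<close> f_cy unfolding ev_def by simp
    finally show ?thesis .
  qed
qed

end

theorem lemma4p2:
  fixes A :: "'a set" and f :: "'a \<Rightarrow> 'a" and n :: nat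
  assumes "n \<ge> 1"
    and "mono_alg A f"
    and "mconnected A f"
    and "has_cycle A f n"
    and "\<not> misomorphic A f (cyc_carrier n) (cyc_fun n)"
    and "inf_part A f = A"
  shows "same_rV A f (hat_carrier n) (hat_fun n)"
proof -
  from assms(2) have Ane: "A \<noteq> {}" and cl: "f ` A \<subseteq> A" unfolding mono_alg_def by auto
  from assms(4) obtain c0 where c0: "c0 \<in> A" "(f^^n) c0 = c0"
    "card ((\<lambda>k. (f^^k) c0) ` {..<n}) = n" unfolding has_cycle_def by blast
  have cinj: "inj_on (\<lambda>k. (f^^k) c0) {..<n}" using c0(3) by (simp add: inj_on_iff_eq_card)
  have conn: "\<And>x. x \<in> A \<Longrightarrow> \<exists>m k. (f^^m) x = (f^^k) c0"
    using assms(3) c0(1) unfolding mconnected_def by blast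
  interpret cs A f n c0 using assms(1) cl c0 cinj conn by unfold_locales auto
  have surA: "A \<subseteq> f ` A"
  proof
    fix x assume "x \<in> A"
    then have "x \<in> inf_part A f" using assms(6) by simp
    then obtain s :: "nat \<Rightarrow> 'a" where "s 0 = x" "\<forall>k. s k \<in> A" "\<forall>k\<ge>1. f (s k) = s (k - 1)"
      unfolding inf_part_def by (simp only: mem_Collect_eq) blast
    then have "f (s 1) = x" "s 1 \<in> A" by auto
    then show "x \<in> f ` A" by (metis image_eqI)
  qed
  have part1: "in_rV A f (hat_carrier n) (hat_fun n)"
  proof -
    define I where "I = insert h0 (H ` (A - C))"
    define e where "e = (\<lambda>x. \<lambda>h\<in>I. h x)"
    define q where "q = (\<lambda>z. ev (z h0))"
    have hI: "h x \<in> hat_carrier n \<and> h (f x) = hat_fun n (h x)" if "h \<in> I" "x \<in> A" for h x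
      using that H_range H_hom h0_range h0_hom unfolding I_def by auto
    have h0I: "h0 \<in> I" by (simp add: I_def)
    show ?thesis
    proof (rule retract_from_embedding[where e=e and q=q and I=I])
      show "A \<noteq> {}" "f ` A \<subseteq> A" "A \<subseteq> f ` A" by fact+
      show "mhom A f (pow_carrier I (hat_carrier n)) (pow_fun I (hat_fun n)) e"
        unfolding mhom_def pow_carrier_def pow_fun_def e_def
      proof (intro conjI ballI subsetI)
        fix z assume "z \<in> (\<lambda>x. \<lambda>h\<in>I. h x) ` A"
        then show "z \<in> PiE I (\<lambda>_. hat_carrier n)" using hI by auto
      next
        fix x assume "x \<in> A"
        then show "(\<lambda>h\<in>I. h (f x)) = (\<lambda>i\<in>I. hat_fun n ((\<lambda>h\<in>I. h x) i))"
          using hI by (auto intro!: restrict_ext)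
      qed
      show "inj_on e A"
      proof (rule inj_onI)
        fix x y assume xy: "x \<in> A" "y \<in> A" "e x = e y"
        show "x = y"
        proof (rule ccontr)
          assume "x \<noteq> y"
          then obtain h where h: "h \<in> I" "h x \<noteq> h y" using sep xy I_def by blast
          moreover have "e x h = h x" "e y h = h y" using h(1) e_def by auto
          ultimately show False using xy(3) by simp
        qed
      qed
      show "mhom (pow_carrier I (hat_carrier n)) (pow_fun I (hat_fun n)) A f q"
        unfolding mhom_def pow_carrier_def pow_fun_def q_def
      proof (intro conjI ballI)
        show "(\<lambda>z. ev (z h0)) ` PiE I (\<lambda>_. hat_carrier n) \<subseteq> A" using ev_range by auto
        fix z assume "z \<in> PiE I (\<lambda>_. hat_carrier n)"
        then have "z h0 \<in> hat_carrier n" using h0I by (auto simp: PiE_iff)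
        then show "ev ((\<lambda>i\<in>I. hat_fun n (z i)) h0) = f (ev (z h0))" using h0I ev_hom by simp
      qed
    qed
  qed
  have notsub: "\<not> A \<subseteq> C"
  proof
    assume AC: "A \<subseteq> C"
    have "misomorphic A f (cyc_carrier n) (cyc_fun n)"
      unfolding misomorphic_def
    proof (intro exI conjI)
      show "mhom A f (cyc_carrier n) (cyc_fun n) ph"
        unfolding mhom_def cyc_carrier_def cyc_fun_def using ph_lt ph_f by auto
      show "bij_betw ph A (cyc_carrier n)" unfolding bij_betw_def cyc_carrier_def
      proof
        show "inj_on ph A"
        proof (rule inj_onI)
          fix x y assume xy: "x \<in> A" "y \<in> A" "ph x = ph y"
          then obtain a b where "x = cy a" "y = cy b" using AC unfolding C_def by blast
          then show "x = y" using xy(3) ph_cy cy_eq_iff by simp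
        qed
        show "ph ` A = {..<n}"
        proof
          show "ph ` A \<subseteq> {..<n}" using ph_lt by auto
          show "{..<n} \<subseteq> ph ` A"
          proof
            fix k assume "k \<in> {..<n}"
            then have "ph (cy k) = k" using ph_cy by simp
            then show "k \<in> ph ` A" using cyA by (metis image_eqI)
          qed
        qed
      qed
    qed
    then show False using assms(5) by simp
  qed
  then obtain a where a: "a \<in> A" "a \<notin> C" by blast
  have exb: "\<forall>a. a \<in> A \<longrightarrow> a \<notin> C \<longrightarrow> (f^^m) a \<in> C \<longrightarrow> (\<exists>b\<in>A. b \<notin> C \<and> f b \<in> C)" for m
  proof (induction m)
    case 0 then show ?case by simp
  next
    case (Suc m)
    show ?case
    proof (intro allI impI)
      fix a assume a: "a \<in> A" "a \<notin> C" "(f^^Suc m) a \<in> C"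
      show "\<exists>b\<in>A. b \<notin> C \<and> f b \<in> C"
      proof (cases "f a \<in> C")
        case True then show ?thesis using a by blast
      next
        case False
        have "(f^^m) (f a) \<in> C" using a(3) by (metis funpow_Suc_right comp_apply)
        then show ?thesis using Suc.IH fA a(1) False by blast
      qed
    qed
  qed
  obtain m k where "(f^^m) a = cy k" using conn[OF a(1)] cy_def by auto
  then have "(f^^m) a \<in> C" by (simp add: C_def)
  then obtain b where b: "b \<in> A" "b \<notin> C" "f b \<in> C" using exb a by blast
  then obtain j0 where j0: "f b = cy j0" unfolding C_def by auto
  have "b \<in> inf_part A f" using assms(6) b(1) by simp
  then obtain s :: "nat \<Rightarrow> 'a" where s: "s 0 = b" "\<forall>k. s k \<in> A" "\<forall>k\<ge>1. f (s k) = s (k - 1)"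
    unfolding inf_part_def by (simp only: mem_Collect_eq) blast
  have sd: "(f^^d) (s (i + d)) = s i" for i d
  proof (induction d)
    case (Suc d)
    have "(f^^Suc d) (s (i + Suc d)) = (f^^d) (f (s (i + Suc d)))" by (metis funpow_Suc_right comp_apply)
    also have "f (s (i + Suc d)) = s (i + d)" using s(3) by simp
    finally show ?case using Suc.IH by simp
  qed simp
  have snC: "s k \<notin> C" for k
  proof
    assume "s k \<in> C"
    then have "(f^^k) (s k) \<in> C" by (rule C_funpow)
    with sd[where i=0 and d=k] s(1) b(2) show False by simp
  qed
  have sinj: "i = j" if "s i = s j" for i j
  proof (rule ccontr)
    assume "i \<noteq> j"
    have *: False if "s i = s j" "i < j" for i j
    proof -
      have "(f^^(j - i)) (s j) = s i" using sd[where i=i and d="j - i"] that by simp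
      then have "(f^^(j - i)) (s i) = s i" using that(1) by simp
      moreover have "1 \<le> j - i" using that(2) by simp
      ultimately have "s i \<in> C" using periodic_in_C s(2) by blast
      then show False using snC by blast
    qed
    show False using *[of i j] *[of j i] that \<open>i \<noteq> j\<close> by (metis linorder_neqE_nat)
  qed
  define emb where "emb = case_sum (\<lambda>k. cy (k + j0)) (\<lambda>k. s (k - 1))"
  have emb_hom: "emb (hat_fun n u) = f (emb u)" if "u \<in> hat_carrier n" for u
  proof (cases u)
    case (Inl k)
    have "(Suc k mod n + j0) mod n = Suc (k + j0) mod n" by (simp add: mod_add_left_eq)
    then have "cy (Suc k mod n + j0) = cy (Suc (k + j0))" using cy_eq_iff by blast
    then show ?thesis using Inl f_cy unfolding emb_def by simp
  next
    case (Inr k)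
    then have k1: "k \<ge> 1" using that unfolding hat_carrier_def by auto
    show ?thesis
    proof (cases "k > 1")
      case True
      have "f (s (k - 1)) = s (k - 1 - 1)" using s(3) True by simp
      then show ?thesis using Inr True unfolding emb_def by simp
    next
      case False
      then have "k = 1" using k1 by simp
      then show ?thesis using Inr j0 s(1) unfolding emb_def by simp
    qed
  qed
  have emb_range: "emb u \<in> A" for u unfolding emb_def using cyA s(2) by (auto split: sum.split)
  have emb_inj: "inj_on emb (hat_carrier n)"
  proof (rule inj_onI)
    fix u v assume uv: "u \<in> hat_carrier n" "v \<in> hat_carrier n" "emb u = emb v"
    show "u = v"
    proof (cases u; cases v)
      fix a b assume ab: "u = Inl a" "v = Inl b"
      then have "a < n" "b < n" using uv unfolding hat_carrier_def by auto
      moreover have "cy (a + j0) = cy (b + j0)" using uv(3) ab unfolding emb_def by simp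
      then have "a mod n = b mod n" using cy_eq_iff mod_rcancel by blast
      ultimately show "u = v" using ab by simp
    next
      fix a b assume ab: "u = Inl a" "v = Inr b"
      have "cy (a + j0) = s (b - 1)" using uv(3) ab unfolding emb_def by simp
      then show "u = v" using snC unfolding C_def by (metis rangeI)
    next
      fix a b assume ab: "u = Inr a" "v = Inl b"
      have "cy (b + j0) = s (a - 1)" using uv(3) ab unfolding emb_def by simp
      then show "u = v" using snC unfolding C_def by (metis rangeI)
    next
      fix a b assume ab: "u = Inr a" "v = Inr b"
      then have "a \<ge> 1" "b \<ge> 1" using uv unfolding hat_carrier_def by auto
      moreover have "s (a - 1) = s (b - 1)" using uv(3) ab unfolding emb_def by simp
      then have "a - 1 = b - 1" by (rule sinj)
      ultimately show "u = v" using ab by simp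
    qed
  qed
  define i0 :: "nat + nat \<Rightarrow> 'a" where "i0 = undefined"
  have part2: "in_rV (hat_carrier n) (hat_fun n) A f"
  proof (rule retract_from_embedding[where I="{i0}" and e="\<lambda>u. \<lambda>i\<in>{i0}. emb u"
        and q="\<lambda>z. (Inl (ph (z i0)) :: nat + nat)"])
    show "hat_carrier n \<noteq> {}" using assms(1) unfolding hat_carrier_def by auto
    show "hat_fun n ` hat_carrier n \<subseteq> hat_carrier n"
    proof
      fix y assume "y \<in> hat_fun n ` hat_carrier n"
      then obtain u where u: "u \<in> hat_carrier n" "y = hat_fun n u" by blast
      show "y \<in> hat_carrier n"
      proof (cases u)
        case (Inl k) then show ?thesis using u assms(1) unfolding hat_carrier_def by auto
      next
        case (Inr k) then show ?thesis using u assms(1) unfolding hat_carrier_def by auto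
      qed
    qed
    show "hat_carrier n \<subseteq> hat_fun n ` hat_carrier n"
    proof
      fix u assume u: "u \<in> hat_carrier n"
      show "u \<in> hat_fun n ` hat_carrier n"
      proof (cases u)
        case (Inl k)
        then have kn: "k < n" using u unfolding hat_carrier_def by auto
        show ?thesis
        proof (cases k)
          case 0
          have "hat_fun n (Inr 1) = u" using Inl 0 by simp
          moreover have "Inr 1 \<in> hat_carrier n" unfolding hat_carrier_def by auto
          ultimately show ?thesis by (metis image_eqI)
        next
          case (Suc k')
          have "hat_fun n (Inl k') = u" using Inl Suc kn by simp
          moreover have "Inl k' \<in> hat_carrier n" using Suc kn unfolding hat_carrier_def by auto
          ultimately show ?thesis by (metis image_eqI)
        qed
      next
        case (Inr k)
        then have "k \<ge> 1" using u unfolding hat_carrier_def by auto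
        then have "hat_fun n (Inr (Suc k)) = u" using Inr by simp
        moreover have "Inr (Suc k) \<in> hat_carrier n" unfolding hat_carrier_def by auto
        ultimately show ?thesis by (metis image_eqI)
      qed
    qed
    show "mhom (hat_carrier n) (hat_fun n) (pow_carrier {i0} A) (pow_fun {i0} f) (\<lambda>u. \<lambda>i\<in>{i0}. emb u)"
      unfolding mhom_def pow_carrier_def pow_fun_def
    proof (intro conjI ballI subsetI)
      fix z assume "z \<in> (\<lambda>u. \<lambda>i\<in>{i0}. emb u) ` hat_carrier n"
      then obtain u where z: "z = restrict (\<lambda>i. emb u) {i0}" by blast
      have "restrict (\<lambda>i. emb u) {i0} \<in> PiE {i0} (\<lambda>_. A)"
        by (rule iffD2[OF restrict_PiE_iff]) (simp add: emb_range)
      then show "z \<in> PiE {i0} (\<lambda>_. A)" unfolding z .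
    next
      fix u assume "u \<in> hat_carrier n"
      then show "(\<lambda>i\<in>{i0}. emb (hat_fun n u)) = (\<lambda>i\<in>{i0}. f ((\<lambda>i\<in>{i0}. emb u) i))"
        using emb_hom by (auto intro!: restrict_ext)
    qed
    show "inj_on (\<lambda>u. \<lambda>i\<in>{i0}. emb u) (hat_carrier n)"
    proof (rule inj_onI)
      fix u v assume uv: "u \<in> hat_carrier n" "v \<in> hat_carrier n"
        "(\<lambda>i\<in>{i0}. emb u) = (\<lambda>i\<in>{i0}. emb v)"
      then have "emb u = emb v" by (metis restrict_apply' singletonI)
      then show "u = v" using emb_inj uv(1,2) by (simp add: inj_on_eq_iff)
    qed
    show "mhom (pow_carrier {i0} A) (pow_fun {i0} f) (hat_carrier n) (hat_fun n)
        (\<lambda>z. (Inl (ph (z i0)) :: nat + nat))"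
      unfolding mhom_def pow_carrier_def pow_fun_def hat_carrier_def
      using ph_lt ph_f by (auto simp: PiE_iff)
  qed
  show ?thesis unfolding same_rV_def using part1 part2 by blast
qed

end
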